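(* (1) For all terms $t,s$, variable $x$ and type $A$: if $t,s\in\mathrm{SN}$ and $t\{x:=s\}\in[\![A]\!]$, then $(\lambda x.t)s\in[\![A]\!]$. (2) For all terms $t_1,t_2$ and types $A_1,A_2$: if $t_1\in[\![A_1]\!]$ and $t_2\in[\![A_2]\!]$, then $\pi_i\langle t_1,t_2\rangle\in[\![A_i]\!]$ for $i=1,2$.
   Context: Terms: $t,s,u ::= x \mid \lambda x.t \mid ts \mid \langle t,s\rangle \mid \pi_1 t \mid \pi_2 t$ (up to $\alpha$-renaming); $t\{x:=s\}$ is capture-avoiding substitution. Top-level rules: $(\lambda x.t)s \mapsto t\{x:=s\}$; $\pi_i\langle t_1,t_2\rangle \mapsto t_i$ ($i=1,2$); $\langle t,s\rangle u \mapsto \langle tu, su\rangle$; $\pi_i(\lambda x.t)\mapsto \lambda x.\pi_i t$ ($i=1,2$); $\to_{\mathsf{dist}}$ is the closure of these rules under all term constructors. $\mathrm{SN}$ is the set of strongly normalizing terms for $\to_{\mathsf{dist}}$. Types: $A ::= \tau \mid A\Rightarrow A \mid A\wedge A$. Interpretation: $[\![\tau]\!]=\mathrm{SN}$; $[\![A\Rightarrow B]\!]=\{t\mid \forall s\in[\![A]\!],\ ts\in[\![B]\!]\}$; $[\![A\wedge B]\!]=\{t\mid \pi_1t\in[\![A]\!]\text{ and }\pi_2 t\in[\![B]\!]\}$. *)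

theory Defs
  imports Main
begin

text \<open>Terms up to alpha-renaming, represented with de Bruijn indices.\<close>
datatype trm = Var nat | Lam trm | App trm trm | Pair trm trm | Proj1 trm | Proj2 trm

primrec lift :: "trm \<Rightarrow> nat \<Rightarrow> trm" where
  "lift (Var i) k = (if i < k then Var i else Var (Suc i))"
| "lift (Lam t) k = Lam (lift t (Suc k))"
| "lift (App t s) k = App (lift t k) (lift s k)"
| "lift (Pair t s) k = Pair (lift t k) (lift s k)"
| "lift (Proj1 t) k = Proj1 (lift t k)"
| "lift (Proj2 t) k = Proj2 (lift t k)"

primrec subst :: "trm \<Rightarrow> nat \<Rightarrow> trm \<Rightarrow> trm" where
  "subst (Var i) k s = (if k < i then Var (i - 1) else if i = k then s else Var i)"
| "subst (Lam t) k s = Lam (subst t (Suc k) (lift s 0))"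
| "subst (App t u) k s = App (subst t k s) (subst u k s)"
| "subst (Pair t u) k s = Pair (subst t k s) (subst u k s)"
| "subst (Proj1 t) k s = Proj1 (subst t k s)"
| "subst (Proj2 t) k s = Proj2 (subst t k s)"

inductive step :: "trm \<Rightarrow> trm \<Rightarrow> bool" (infix "\<rightarrow>\<^sub>d" 50) where
  beta: "App (Lam t) s \<rightarrow>\<^sub>d subst t 0 s"
| proj1_pair: "Proj1 (Pair t1 t2) \<rightarrow>\<^sub>d t1"
| proj2_pair: "Proj2 (Pair t1 t2) \<rightarrow>\<^sub>d t2"
| app_pair: "App (Pair t s) u \<rightarrow>\<^sub>d Pair (App t u) (App s u)"
| proj1_lam: "Proj1 (Lam t) \<rightarrow>\<^sub>d Lam (Proj1 t)"
| proj2_lam: "Proj2 (Lam t) \<rightarrow>\<^sub>d Lam (Proj2 t)"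
| lam: "t \<rightarrow>\<^sub>d t' \<Longrightarrow> Lam t \<rightarrow>\<^sub>d Lam t'"
| appL: "t \<rightarrow>\<^sub>d t' \<Longrightarrow> App t s \<rightarrow>\<^sub>d App t' s"
| appR: "s \<rightarrow>\<^sub>d s' \<Longrightarrow> App t s \<rightarrow>\<^sub>d App t s'"
| pairL: "t \<rightarrow>\<^sub>d t' \<Longrightarrow> Pair t s \<rightarrow>\<^sub>d Pair t' s"
| pairR: "s \<rightarrow>\<^sub>d s' \<Longrightarrow> Pair t s \<rightarrow>\<^sub>d Pair t s'"
| proj1: "t \<rightarrow>\<^sub>d t' \<Longrightarrow> Proj1 t \<rightarrow>\<^sub>d Proj1 t'"
| proj2: "t \<rightarrow>\<^sub>d t' \<Longrightarrow> Proj2 t \<rightarrow>\<^sub>d Proj2 t'"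

definition SN :: "trm set" where
  "SN = {t. Wellfounded.accp (\<lambda>u v. v \<rightarrow>\<^sub>d u) t}"

datatype ty = Atom nat | Arr ty ty | Conj ty ty

fun interp :: "ty \<Rightarrow> trm set" where
  "interp (Atom a) = SN"
| "interp (Arr A B) = {t. \<forall>s \<in> interp A. App t s \<in> interp B}"
| "interp (Conj A B) = {t. Proj1 t \<in> interp A \<and> Proj2 t \<in> interp B}"

end

theory Submission
  imports Defs
begin

lemma lift_lift: "i < k + 1 \<Longrightarrow> lift (lift t i) (Suc k) = lift (lift t k) i"
  by (induct t arbitrary: i k) auto

lemma lift_subst [simp]: "j < i + 1 \<Longrightarrow> lift (subst t j s) i = subst (lift t (i + 1)) j (lift s i)"
  by (induct t arbitrary: i j s) (simp_all add: diff_Suc lift_lift split: nat.split)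

lemma lift_subst_lt: "i < j + 1 \<Longrightarrow> lift (subst t j s) i = subst (lift t i) (j + 1) (lift s i)"
  by (induct t arbitrary: i j s) (simp_all add: lift_lift, linarith?)

lemma subst_lift [simp]: "subst (lift t k) k s = t"
  by (induct t arbitrary: k s) simp_all

lemma subst_subst: "i < j + 1 \<Longrightarrow>
  subst (subst t (Suc j) (lift v i)) i (subst u j v) = subst (subst t i u) j v"
  by (induct t arbitrary: i j u v) (simp_all add: diff_Suc lift_lift [symmetric] lift_subst_lt split: nat.split)

lemma lift_preserves: "r \<rightarrow>\<^sub>d s \<Longrightarrow> lift r i \<rightarrow>\<^sub>d lift s i"
  by (induct arbitrary: i rule: step.induct) (auto intro: step.intros)

lemma subst_preserves: "r \<rightarrow>\<^sub>d s \<Longrightarrow> subst r i t \<rightarrow>\<^sub>d subst s i t"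
proof (induct arbitrary: t i rule: step.induct)
  case (beta t u v i)
  have "subst (subst t (Suc i) (lift v 0)) 0 (subst u i v) = subst (subst t 0 u) i v"
    using subst_subst[of 0 i t v u] by simp
  then show ?case using step.beta[of "subst t (Suc i) (lift v 0)" "subst u i v"] by simp
qed (auto intro: step.intros)

abbreviation steps (infix "\<rightarrow>\<^sub>d\<^sup>*" 50) where "steps \<equiv> step\<^sup>*\<^sup>*"

lemma steps_cong:
  "a \<rightarrow>\<^sub>d\<^sup>* b \<Longrightarrow> Lam a \<rightarrow>\<^sub>d\<^sup>* Lam b"
  "a \<rightarrow>\<^sub>d\<^sup>* b \<Longrightarrow> App a c \<rightarrow>\<^sub>d\<^sup>* App b c"
  "a \<rightarrow>\<^sub>d\<^sup>* b \<Longrightarrow> App c a \<rightarrow>\<^sub>d\<^sup>* App c b"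
  "a \<rightarrow>\<^sub>d\<^sup>* b \<Longrightarrow> Pair a c \<rightarrow>\<^sub>d\<^sup>* Pair b c"
  "a \<rightarrow>\<^sub>d\<^sup>* b \<Longrightarrow> Pair c a \<rightarrow>\<^sub>d\<^sup>* Pair c b"
  "a \<rightarrow>\<^sub>d\<^sup>* b \<Longrightarrow> Proj1 a \<rightarrow>\<^sub>d\<^sup>* Proj1 b"
  "a \<rightarrow>\<^sub>d\<^sup>* b \<Longrightarrow> Proj2 a \<rightarrow>\<^sub>d\<^sup>* Proj2 b"
  by (induct rule: rtranclp_induct, auto intro: step.intros rtranclp.rtrancl_into_rtrancl)+

lemma steps_trans: "a \<rightarrow>\<^sub>d\<^sup>* b \<Longrightarrow> b \<rightarrow>\<^sub>d\<^sup>* c \<Longrightarrow> a \<rightarrow>\<^sub>d\<^sup>* c"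
  by (rule rtranclp_trans)

lemma subst_preserves2: "r \<rightarrow>\<^sub>d s \<Longrightarrow> subst t i r \<rightarrow>\<^sub>d\<^sup>* subst t i s"
proof (induct t arbitrary: r s i)
  case (Var x)
  then show ?case by auto
next
  case (Lam t)
  then show ?case by (simp add: lift_preserves steps_cong)
next
  case (App t1 t2)
  then show ?case by (simp, meson steps_cong steps_trans)
next
  case (Pair t1 t2)
  then show ?case by (simp, meson steps_cong steps_trans)
qed (simp_all add: steps_cong)

inductive_cases stepAppE: "App t s \<rightarrow>\<^sub>d u"
inductive_cases stepLamE: "Lam t \<rightarrow>\<^sub>d u"
inductive_cases stepProj1E: "Proj1 t \<rightarrow>\<^sub>d u"
inductive_cases stepProj2E: "Proj2 t \<rightarrow>\<^sub>d u"
inductive_cases stepPairE: "Pair t s \<rightarrow>\<^sub>d u"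
inductive_cases stepVarE: "Var i \<rightarrow>\<^sub>d u"

definition neutral :: "trm \<Rightarrow> bool" where
  "neutral t = (case t of Lam _ \<Rightarrow> False | Pair _ _ \<Rightarrow> False | _ \<Rightarrow> True)"

lemma SN_step: "t \<in> SN \<Longrightarrow> t \<rightarrow>\<^sub>d t' \<Longrightarrow> t' \<in> SN"
  unfolding SN_def by (auto intro: accp_downward)

lemma SN_intro: "(\<And>t'. t \<rightarrow>\<^sub>d t' \<Longrightarrow> t' \<in> SN) \<Longrightarrow> t \<in> SN"
  unfolding SN_def by (auto intro: accp.accI)

lemma SN_App: "App t s \<in> SN \<Longrightarrow> t \<in> SN"
proof -
  have "\<forall>t s. u = App t s \<longrightarrow> t \<in> SN" if "Wellfounded.accp (\<lambda>u v. v \<rightarrow>\<^sub>d u) u" for u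
    using that
  proof (induct rule: accp_induct_rule)
    case (1 x)
    show ?case
    proof (intro allI impI)
      fix t s assume "x = App t s"
      show "t \<in> SN"
        by (rule SN_intro) (use 1 \<open>x = App t s\<close> in \<open>auto intro: step.appL\<close>)
    qed
  qed
  then show "App t s \<in> SN \<Longrightarrow> t \<in> SN" unfolding SN_def by auto
qed

lemma CR2: "t \<in> interp A \<Longrightarrow> t \<rightarrow>\<^sub>d t' \<Longrightarrow> t' \<in> interp A"
  by (induct A arbitrary: t t') (simp_all, (force intro: SN_step step.intros)+)

lemma CR2s: "t \<rightarrow>\<^sub>d\<^sup>* t' \<Longrightarrow> t \<in> interp A \<Longrightarrow> t' \<in> interp A"
  by (induct rule: rtranclp_induct) (auto intro: CR2)

lemma CR13: "(\<forall>t \<in> interp A. t \<in> SN) \<and>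
   (\<forall>t. neutral t \<longrightarrow> (\<forall>t'. t \<rightarrow>\<^sub>d t' \<longrightarrow> t' \<in> interp A) \<longrightarrow> t \<in> interp A)"
proof (induct A)
  case (Atom x)
  then show ?case by (auto intro: SN_intro)
next
  case (Arr B C)
  have "neutral (Var 0)" by (simp add: neutral_def)
  moreover have "\<forall>t'. Var 0 \<rightarrow>\<^sub>d t' \<longrightarrow> t' \<in> interp B" by (auto elim: stepVarE)
  ultimately have varB: "Var 0 \<in> interp B" using Arr(1) by blast
  show ?case
  proof (intro conjI ballI allI impI)
    fix t assume "t \<in> interp (Arr B C)"
    then have "App t (Var 0) \<in> SN" using varB Arr(2) by auto
    then show "t \<in> SN" by (rule SN_App)
  next
    fix t assume ne: "neutral t" and red: "\<forall>t'. t \<rightarrow>\<^sub>d t' \<longrightarrow> t' \<in> interp (Arr B C)"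
    have "u \<in> interp B \<longrightarrow> App t u \<in> interp C" if "Wellfounded.accp (\<lambda>u v. v \<rightarrow>\<^sub>d u) u" for u
      using that
    proof (induct rule: accp_induct_rule)
      case (1 u)
      show ?case
      proof
        assume uB: "u \<in> interp B"
        have "neutral (App t u)" by (simp add: neutral_def)
        moreover have "\<forall>w. App t u \<rightarrow>\<^sub>d w \<longrightarrow> w \<in> interp C"
        proof (intro allI impI)
          fix w assume "App t u \<rightarrow>\<^sub>d w"
          then show "w \<in> interp C"
            by (rule stepAppE) (use ne red uB 1 CR2 in \<open>auto simp: neutral_def\<close>)
        qed
        ultimately show "App t u \<in> interp C" using Arr(2) by blast
      qed
    qed
    then show "t \<in> interp (Arr B C)" using Arr(1) unfolding SN_def by auto
  qed
next
  case (Conj B C)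
  show ?case
  proof (intro conjI ballI allI impI)
    fix t assume "t \<in> interp (Conj B C)"
    then have "Proj1 t \<in> SN" using Conj(1) by auto
    have "\<forall>t. u = Proj1 t \<longrightarrow> t \<in> SN" if "Wellfounded.accp (\<lambda>u v. v \<rightarrow>\<^sub>d u) u" for u
      using that
    proof (induct rule: accp_induct_rule)
      case (1 x)
      show ?case
      proof (intro allI impI)
        fix t assume "x = Proj1 t"
        show "t \<in> SN"
          by (rule SN_intro) (use 1 \<open>x = Proj1 t\<close> in \<open>auto intro: step.proj1\<close>)
      qed
    qed
    then show "t \<in> SN" using \<open>Proj1 t \<in> SN\<close> unfolding SN_def by auto
  next
    fix t assume ne: "neutral t" and red: "\<forall>t'. t \<rightarrow>\<^sub>d t' \<longrightarrow> t' \<in> interp (Conj B C)"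
    have "Proj1 t \<in> interp B"
    proof -
      have "neutral (Proj1 t)" by (simp add: neutral_def)
      moreover have "\<forall>w. Proj1 t \<rightarrow>\<^sub>d w \<longrightarrow> w \<in> interp B"
      proof (intro allI impI)
        fix w assume "Proj1 t \<rightarrow>\<^sub>d w"
        then show "w \<in> interp B"
          by (rule stepProj1E) (use ne red in \<open>auto simp: neutral_def\<close>)
      qed
      ultimately show ?thesis using Conj(1) by blast
    qed
    moreover have "Proj2 t \<in> interp C"
    proof -
      have "neutral (Proj2 t)" by (simp add: neutral_def)
      moreover have "\<forall>w. Proj2 t \<rightarrow>\<^sub>d w \<longrightarrow> w \<in> interp C"
      proof (intro allI impI)
        fix w assume "Proj2 t \<rightarrow>\<^sub>d w"
        then show "w \<in> interp C"
          by (rule stepProj2E) (use ne red in \<open>auto simp: neutral_def\<close>)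
      qed
      ultimately show ?thesis using Conj(2) by blast
    qed
    ultimately show "t \<in> interp (Conj B C)" by simp
  qed
qed

lemma CR1: "t \<in> interp A \<Longrightarrow> t \<in> SN" using CR13 by blast
lemma CR3: "neutral t \<Longrightarrow> (\<And>t'. t \<rightarrow>\<^sub>d t' \<Longrightarrow> t' \<in> interp A) \<Longrightarrow> t \<in> interp A"
  using CR13 by blast

lemma part1: assumes "Wellfounded.accp (\<lambda>u v. v \<rightarrow>\<^sub>d u) t" shows "
  \<forall>s. Wellfounded.accp (\<lambda>u v. v \<rightarrow>\<^sub>d u) s \<longrightarrow> subst t 0 s \<in> interp A \<longrightarrow> App (Lam t) s \<in> interp A"
  using assms
proof (induct t rule: accp_induct_rule)
  case (1 t)
  note IHt = this
  show ?case
  proof (intro allI impI)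
    fix s assume "Wellfounded.accp (\<lambda>u v. v \<rightarrow>\<^sub>d u) s"
    then show "subst t 0 s \<in> interp A \<Longrightarrow> App (Lam t) s \<in> interp A"
    proof (induct s rule: accp_induct_rule)
      case (1 s)
      note IHs = this
      show ?case
      proof (rule CR3)
        show "neutral (App (Lam t) s)" by (simp add: neutral_def)
      next
        fix w assume "App (Lam t) s \<rightarrow>\<^sub>d w"
        then consider (b) "w = subst t 0 s"
          | (l) t' where "w = App (Lam t') s" "t \<rightarrow>\<^sub>d t'"
          | (r) s' where "w = App (Lam t) s'" "s \<rightarrow>\<^sub>d s'"
          by (auto elim!: stepAppE stepLamE)
        then show "w \<in> interp A"
        proof cases
          case b
          then show ?thesis using IHs(3) by simp
        next
          case (l t')
          moreover have "subst t' 0 s \<in> interp A"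
            using CR2 IHs(3) subst_preserves \<open>t \<rightarrow>\<^sub>d t'\<close> by blast
          ultimately show ?thesis using IHt(2)[of t'] IHs(1) by blast
        next
          case (r s')
          have "subst t 0 s' \<in> interp A"
            using CR2s subst_preserves2 IHs(3) \<open>s \<rightarrow>\<^sub>d s'\<close> by blast
          then show ?thesis using IHs(2) r by blast
        qed
      qed
    qed
  qed
qed

lemma part2:
  assumes "t1 \<in> interp A1" "t2 \<in> interp A2"
  shows "Proj1 (Pair t1 t2) \<in> interp A1 \<and> Proj2 (Pair t1 t2) \<in> interp A2"
proof -
  have acc1: "Wellfounded.accp (\<lambda>u v. v \<rightarrow>\<^sub>d u) t1" and acc2: "Wellfounded.accp (\<lambda>u v. v \<rightarrow>\<^sub>d u) t2"
    using CR1 assms unfolding SN_def by auto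
  have "\<forall>b. Wellfounded.accp (\<lambda>u v. v \<rightarrow>\<^sub>d u) b \<longrightarrow> a \<in> interp A1 \<longrightarrow> b \<in> interp A2 \<longrightarrow>
     Proj1 (Pair a b) \<in> interp A1 \<and> Proj2 (Pair a b) \<in> interp A2"
     if "Wellfounded.accp (\<lambda>u v. v \<rightarrow>\<^sub>d u) a" for a
    using that
  proof (induct a rule: accp_induct_rule)
    case (1 a)
    note IHa = this
    show ?case
    proof (intro allI impI)
      fix b assume "Wellfounded.accp (\<lambda>u v. v \<rightarrow>\<^sub>d u) b"
      then show "a \<in> interp A1 \<Longrightarrow> b \<in> interp A2 \<Longrightarrow>
        Proj1 (Pair a b) \<in> interp A1 \<and> Proj2 (Pair a b) \<in> interp A2"
      proof (induct b rule: accp_induct_rule)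
        case (1 b)
        note IHb = this
        have accb: "Wellfounded.accp (\<lambda>u v. v \<rightarrow>\<^sub>d u) b" by (fact IHb(1))
        show ?case
        proof
          show "Proj1 (Pair a b) \<in> interp A1"
          proof (rule CR3)
            show "neutral (Proj1 (Pair a b))" by (simp add: neutral_def)
          next
            fix w assume "Proj1 (Pair a b) \<rightarrow>\<^sub>d w"
            then consider (e) "w = a"
              | (l) a' where "w = Proj1 (Pair a' b)" "a \<rightarrow>\<^sub>d a'"
              | (r) b' where "w = Proj1 (Pair a b')" "b \<rightarrow>\<^sub>d b'"
              by (auto elim!: stepProj1E stepPairE)
            then show "w \<in> interp A1"
            proof cases
              case e then show ?thesis using IHb(3,4) by simp
            next
              case (l a')
              then show ?thesis using IHa(2)[of a'] accb IHb(3,4) CR2 by blast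
            next
              case (r b')
              then show ?thesis using IHb(2)[of b'] IHb(3,4) CR2 by blast
            qed
          qed
        next
          show "Proj2 (Pair a b) \<in> interp A2"
          proof (rule CR3)
            show "neutral (Proj2 (Pair a b))" by (simp add: neutral_def)
          next
            fix w assume "Proj2 (Pair a b) \<rightarrow>\<^sub>d w"
            then consider (e) "w = b"
              | (l) a' where "w = Proj2 (Pair a' b)" "a \<rightarrow>\<^sub>d a'"
              | (r) b' where "w = Proj2 (Pair a b')" "b \<rightarrow>\<^sub>d b'"
              by (auto elim!: stepProj2E stepPairE)
            then show "w \<in> interp A2"
            proof cases
              case e then show ?thesis using IHb(3,4) by simp
            next
              case (l a')
              then show ?thesis using IHa(2)[of a'] accb IHb(3,4) CR2 by blast
            next
              case (r b')
              then show ?thesis using IHb(2)[of b'] IHb(3,4) CR2 by blast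
            qed
          qed
        qed
      qed
    qed
  qed
  then show ?thesis using acc1 acc2 assms by blast
qed

theorem lemma6:
  shows "(\<forall>t s A. t \<in> SN \<longrightarrow> s \<in> SN \<longrightarrow> subst t 0 s \<in> interp A \<longrightarrow> App (Lam t) s \<in> interp A)
       \<and> (\<forall>t1 t2 A1 A2. t1 \<in> interp A1 \<longrightarrow> t2 \<in> interp A2 \<longrightarrow>
            Proj1 (Pair t1 t2) \<in> interp A1 \<and> Proj2 (Pair t1 t2) \<in> interp A2)"
  using part1 part2 unfolding SN_def by blast

end
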